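(* Let $\mathbf{A}$ be an algebra with an $m$-ary, $p$-pointed, $k$-cube term, with at least one constant symbol appearing in the cube identities (so $p\geq 1$). If $\mathbf{A}^{p+k-1}$ is finitely generated, then all finite powers of $\mathbf{A}$ are finitely generated and $d_{\mathbf{A}}(n)$ is bounded above by a polynomial of degree at most $\log_w(m)$, where $w = 2k/(2k-1)$ (i.e., $d_{\mathbf{A}}(n)\in O(n^{\log_w(m)})$).
   Context: An algebra $\mathbf{A}$ has an $m$-ary, $p$-pointed, $k$-cube term if there is a term $F(x_1,\dots,x_m)$ in the language of $\mathbf{A}$ and a $k\times m$ matrix $M=[y_{i,j}]$ whose entries are variables and constant symbols (nullary operation symbols of the language), exactly $p$ distinct constant symbols occurring, such that every column of $M$ contains an entry different from the variable $x$, and the identities $F(y_{i,1},\dots,y_{i,m})\approx x$ (the cube identities), $i=1,\dots,k$, hold in $\mathbf{A}$. $d_{\mathbf{A}}(n)$ is the least size of a generating set of $\mathbf{A}^n$. *)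

theory Defs
  imports Complex_Main "HOL-Library.Landau_Symbols"
begin

(* An algebra is given by a carrier A :: 'a set, an arity function ar :: 'f => nat
   on the operation symbols, and interpretations ops :: 'f => 'a list => 'a
   (ops f is only meaningful on argument lists of length ar f). *)

definition is_algebra :: "'a set \<Rightarrow> ('f \<Rightarrow> nat) \<Rightarrow> ('f \<Rightarrow> 'a list \<Rightarrow> 'a) \<Rightarrow> bool" where
  "is_algebra A ar ops \<longleftrightarrow> A \<noteq> {} \<and>
     (\<forall>f xs. length xs = ar f \<longrightarrow> set xs \<subseteq> A \<longrightarrow> ops f xs \<in> A)"

datatype ('f, 'v) trm = Var 'v | App 'f "('f, 'v) trm list"

fun wf_trm :: "('f \<Rightarrow> nat) \<Rightarrow> ('f, 'v) trm \<Rightarrow> bool" where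
  "wf_trm ar (Var v) = True"
| "wf_trm ar (App f ts) = (length ts = ar f \<and> (\<forall>t\<in>set ts. wf_trm ar t))"

fun vars_trm :: "('f, 'v) trm \<Rightarrow> 'v set" where
  "vars_trm (Var v) = {v}"
| "vars_trm (App f ts) = (\<Union>t\<in>set ts. vars_trm t)"

fun eval_trm :: "('f \<Rightarrow> 'a list \<Rightarrow> 'a) \<Rightarrow> ('v \<Rightarrow> 'a) \<Rightarrow> ('f, 'v) trm \<Rightarrow> 'a" where
  "eval_trm ops s (Var v) = s v"
| "eval_trm ops s (App f ts) = ops f (map (eval_trm ops s) ts)"

datatype 'f entry = EVar nat | ECon 'f

fun entry_val :: "('f \<Rightarrow> 'a list \<Rightarrow> 'a) \<Rightarrow> (nat \<Rightarrow> 'a) \<Rightarrow> 'f entry \<Rightarrow> 'a" where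
  "entry_val ops s (EVar v) = s v"
| "entry_val ops s (ECon c) = ops c []"

definition consts_of :: "nat \<Rightarrow> nat \<Rightarrow> (nat \<Rightarrow> nat \<Rightarrow> 'f entry) \<Rightarrow> 'f set" where
  "consts_of k m M = {c. \<exists>i<k. \<exists>j<m. M i j = ECon c}"

(* A has an m-ary, p-pointed, k-cube term: term F(x_0,...,x_{m-1}) (variables 0..m-1),
   k x m matrix M (rows i<k, columns j<m) of variables and constant symbols, with
   exactly p distinct constant symbols, distinguished variable x, every column
   containing an entry different from x, and the cube identities holding in A. *)
definition has_cube_term ::
  "'a set \<Rightarrow> ('f \<Rightarrow> nat) \<Rightarrow> ('f \<Rightarrow> 'a list \<Rightarrow> 'a) \<Rightarrow> nat \<Rightarrow> nat \<Rightarrow> nat \<Rightarrow> bool" where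
  "has_cube_term A ar ops m p k \<longleftrightarrow>
    (\<exists>(F :: ('f, nat) trm) (M :: nat \<Rightarrow> nat \<Rightarrow> 'f entry) (x :: nat).
       wf_trm ar F \<and> vars_trm F \<subseteq> {..<m} \<and>
       (\<forall>i<k. \<forall>j<m. \<forall>c. M i j = ECon c \<longrightarrow> ar c = 0) \<and>
       finite (consts_of k m M) \<and> card (consts_of k m M) = p \<and>
       (\<forall>j<m. \<exists>i<k. M i j \<noteq> EVar x) \<and>
       (\<forall>i<k. \<forall>s. (\<forall>v. s v \<in> A) \<longrightarrow>
            eval_trm ops (\<lambda>j. entry_val ops s (M i j)) F = s x))"

definition power_carrier :: "'a set \<Rightarrow> nat \<Rightarrow> 'a list set" where
  "power_carrier A n = {xs. length xs = n \<and> set xs \<subseteq> A}"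

inductive_set gen_power :: "('f \<Rightarrow> nat) \<Rightarrow> ('f \<Rightarrow> 'a list \<Rightarrow> 'a) \<Rightarrow> nat \<Rightarrow> 'a list set \<Rightarrow> 'a list set"
  for ar ops n G where
  base: "x \<in> G \<Longrightarrow> x \<in> gen_power ar ops n G"
| app: "length xs = ar f \<Longrightarrow> (\<forall>x\<in>set xs. x \<in> gen_power ar ops n G) \<Longrightarrow>
        map (\<lambda>l. ops f (map (\<lambda>x. x ! l) xs)) [0..<n] \<in> gen_power ar ops n G"

definition generates_power ::
  "'a set \<Rightarrow> ('f \<Rightarrow> nat) \<Rightarrow> ('f \<Rightarrow> 'a list \<Rightarrow> 'a) \<Rightarrow> nat \<Rightarrow> 'a list set \<Rightarrow> bool" where
  "generates_power A ar ops n G \<longleftrightarrow>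
     G \<subseteq> power_carrier A n \<and> gen_power ar ops n G = power_carrier A n"

definition fin_gen_power :: "'a set \<Rightarrow> ('f \<Rightarrow> nat) \<Rightarrow> ('f \<Rightarrow> 'a list \<Rightarrow> 'a) \<Rightarrow> nat \<Rightarrow> bool" where
  "fin_gen_power A ar ops n \<longleftrightarrow> (\<exists>G. finite G \<and> generates_power A ar ops n G)"

definition d_alg :: "'a set \<Rightarrow> ('f \<Rightarrow> nat) \<Rightarrow> ('f \<Rightarrow> 'a list \<Rightarrow> 'a) \<Rightarrow> nat \<Rightarrow> nat" where
  "d_alg A ar ops n = (LEAST c. \<exists>G. finite G \<and> card G = c \<and> generates_power A ar ops n G)"

end

theory Submission
  imports Defs
begin


lemma gen_power_mono:
  assumes "G \<subseteq> G'" "y \<in> gen_power ar ops n G"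
  shows "y \<in> gen_power ar ops n G'"
  using assms(2)
proof (induction rule: gen_power.induct)
  case (base x) then show ?case using assms(1) by (auto intro: gen_power.base)
next
  case (app xs f) then show ?case by (auto intro: gen_power.app)
qed

lemma gen_power_carrier:
  assumes alg: "is_algebra A ar ops" and G: "G \<subseteq> power_carrier A n"
    and "y \<in> gen_power ar ops n G"
  shows "y \<in> power_carrier A n"
  using assms(3)
proof (induction rule: gen_power.induct)
  case (base x) then show ?case using G by auto
next
  case (app xs f)
  have "ops f (map (\<lambda>x. x ! l) xs) \<in> A" if "l < n" for l
  proof -
    have "set (map (\<lambda>x. x ! l) xs) \<subseteq> A"
      using app.IH that by (fastforce simp: power_carrier_def)
    then show ?thesis using alg app.hyps(1) unfolding is_algebra_def by auto
  qed
  then show ?case by (auto simp: power_carrier_def)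
qed

lemma gen_power_hom:
  assumes psi: "\<forall>l<n. \<psi> l < N" and "y \<in> gen_power ar ops N G"
  shows "map (\<lambda>l. y ! \<psi> l) [0..<n] \<in> gen_power ar ops n ((\<lambda>z. map (\<lambda>l. z ! \<psi> l) [0..<n]) ` G)"
  using assms(2)
proof (induction rule: gen_power.induct)
  case (base x) then show ?case by (auto intro: gen_power.base)
next
  case (app xs f)
  let ?h = "\<lambda>z. map (\<lambda>l. z ! \<psi> l) [0..<n]"
  have ga: "map (\<lambda>l. ops f (map (\<lambda>x. x ! l) (map ?h xs))) [0..<n]
        \<in> gen_power ar ops n (?h ` G)"
    by (rule gen_power.app) (use app in auto)
  moreover have "map (\<lambda>l. ops f (map (\<lambda>x. x ! l) (map ?h xs))) [0..<n]
     = map (\<lambda>l. map (\<lambda>l. ops f (map (\<lambda>x. x ! l) xs)) [0..<N] ! \<psi> l) [0..<n]"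
    using psi by (auto simp: o_def)
  ultimately show ?case by metis
qed

lemma eval_cong:
  "(\<forall>v\<in>vars_trm t. s v = s' v) \<Longrightarrow> eval_trm ops s t = eval_trm ops s' t"
proof (induction t)
  case (App f ts)
  have "map (eval_trm ops s) ts = map (eval_trm ops s') ts"
  proof (rule map_cong[OF refl])
    fix t assume "t \<in> set ts" then show "eval_trm ops s t = eval_trm ops s' t"
      using App by auto
  qed
  then show ?case by (metis eval_trm.simps(2))
qed simp

lemma gen_power_term:
  assumes "wf_trm ar t" "vars_trm t \<subseteq> {..<m}"
    and "\<forall>j<m. b j \<in> gen_power ar ops N G \<and> length (b j) = N"
  shows "map (\<lambda>l. eval_trm ops (\<lambda>j. b j ! l) t) [0..<N] \<in> gen_power ar ops N G"
  using assms(1,2)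
proof (induction t)
  case (Var v)
  then have "map (\<lambda>l. b v ! l) [0..<N] = b v" using assms(3)
    by (auto intro: nth_equalityI)
  then show ?case using assms(3) Var by auto
next
  case (App f ts)
  let ?xs = "map (\<lambda>t. map (\<lambda>l. eval_trm ops (\<lambda>j. b j ! l) t) [0..<N]) ts"
  have "map (\<lambda>l. ops f (map (\<lambda>x. x ! l) ?xs)) [0..<N] \<in> gen_power ar ops N G"
    by (rule gen_power.app) (use App in auto)
  moreover have "map (\<lambda>l. ops f (map (\<lambda>x. x ! l) ?xs)) [0..<N] =
     map (\<lambda>l. eval_trm ops (\<lambda>j. b j ! l) (App f ts)) [0..<N]"
    by (auto simp: o_def intro!: map_cong)
  ultimately show ?case by metis
qed



locale cube_loc =
  fixes A :: "'a set" and ar :: "'f \<Rightarrow> nat" and ops :: "'f \<Rightarrow> 'a list \<Rightarrow> 'a"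
    and k m p :: nat and F :: "('f, nat) trm" and M :: "nat \<Rightarrow> nat \<Rightarrow> 'f entry"
    and x :: nat and cs :: "'f list"
  assumes alg: "is_algebra A ar ops"
    and wfF: "wf_trm ar F" and varsF: "vars_trm F \<subseteq> {..<m}"
    and cube: "\<forall>i<k. \<forall>s. (\<forall>v. s v \<in> A) \<longrightarrow> eval_trm ops (\<lambda>j. entry_val ops s (M i j)) F = s x"
    and cs_in: "\<forall>i<k. \<forall>j<m. \<forall>c. M i j = ECon c \<longrightarrow> c \<in> set cs"
    and cs_ar: "\<forall>c\<in>set cs. ar c = 0"
    and len: "length cs = p" and p1: "p \<ge> 1" and k1: "k \<ge> 1" and m1: "m \<ge> 1"
    and cols: "\<forall>j<m. \<exists>i<k. M i j \<noteq> EVar x"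
begin

definition cv where "cv = map (\<lambda>c. ops c []) cs"

lemma len_cv: "length cv = p" by (simp add: cv_def len)

lemma cv_A: "set cv \<subseteq> A"
  using alg cs_ar unfolding cv_def is_algebra_def by fastforce

definition e0 where "e0 = cv ! 0"

lemma e0_A: "e0 \<in> A"
proof -
  have "0 < length cv" using len_cv p1 by simp
  then show ?thesis using cv_A unfolding e0_def by (meson nth_mem subsetD)
qed

definition good where
  "good n H \<longleftrightarrow> finite H \<and> H \<subseteq> power_carrier A (n+p) \<and>
     (\<forall>a\<in>power_carrier A n. a @ cv \<in> gen_power ar ops (n+p) H)"

definition dl where "dl n j = filter (\<lambda>l. M (l mod k) j = EVar x) [0..<n]"

definition cix where "cix c = (SOME t. t < p \<and> cs ! t = c)"

lemma cix: "c \<in> set cs \<Longrightarrow> cix c < p \<and> cs ! cix c = c"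
  unfolding cix_def by (rule someI_ex) (metis in_set_conv_nth len)

definition pos :: "nat \<Rightarrow> 'f entry \<Rightarrow> nat \<Rightarrow> nat" where
  "pos r e xi = (case e of EVar v \<Rightarrow> if v = x then xi else r | ECon c \<Rightarrow> r + cix c)"

definition psi where
  "psi n j l = (if l < n then pos (length (dl n j)) (M (l mod k) j)
                   (SOME i. i < length (dl n j) \<and> dl n j ! i = l)
                else pos (length (dl n j)) (M 0 j) (length (dl n j) + (l - n)))"

definition hmap where "hmap n j z = map (\<lambda>l. z ! psi n j l) [0..<n+p]"

definition zz where
  "zz n j a = map (\<lambda>i. a ! (dl n j ! i)) [0..<length (dl n j)] @ cv"

lemma pos_lt:
  assumes "e = EVar x \<Longrightarrow> xi < r + p" "\<And>c. e = ECon c \<Longrightarrow> c \<in> set cs"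
  shows "pos r e xi < r + p"
  using assms p1 cix by (cases e) (auto simp: pos_def)

lemma psi_lt:
  assumes "j < m" "l < n + p"
  shows "psi n j l < length (dl n j) + p"
proof (cases "l < n")
  case True
  have lk: "l mod k < k" using k1 by simp
  show ?thesis unfolding psi_def using True
  proof (simp, intro pos_lt)
    show "\<And>c. M (l mod k) j = ECon c \<Longrightarrow> c \<in> set cs" using cs_in lk assms(1) by blast
    show "(SOME i. i < length (dl n j) \<and> dl n j ! i = l) < length (dl n j) + p"
      if ex: "M (l mod k) j = EVar x"
    proof -
      have "l \<in> set (dl n j)" using \<open>l < n\<close> ex by (simp add: dl_def)
      then have "\<exists>i. i < length (dl n j) \<and> dl n j ! i = l" by (simp add: in_set_conv_nth)
      then have "(SOME i. i < length (dl n j) \<and> dl n j ! i = l) < length (dl n j)"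
        by (rule someI2_ex) auto
      then show ?thesis by simp
    qed
  qed
next
  case False
  show ?thesis unfolding psi_def using False assms
    by (auto intro!: pos_lt simp: len_cv) (use cs_in k1 in auto)
qed

lemma zz_nth1: "i < length (dl n j) \<Longrightarrow> zz n j a ! i = a ! (dl n j ! i)"
  by (simp add: zz_def nth_append)

lemma zz_nth2: "t < p \<Longrightarrow> zz n j a ! (length (dl n j) + t) = cv ! t"
  by (simp add: zz_def nth_append)

definition sv where "sv val = (\<lambda>v. if v = x then val else e0)"

lemma sv_A: "val \<in> A \<Longrightarrow> sv val v \<in> A" using e0_A by (simp add: sv_def)

lemma pos_val:
  assumes "e = EVar x \<Longrightarrow> zz n j a ! xi = val" "\<And>c. e = ECon c \<Longrightarrow> c \<in> set cs"
  shows "zz n j a ! pos (length (dl n j)) e xi = entry_val ops (sv val) e"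
proof (cases e)
  case (EVar v)
  show ?thesis
  proof (cases "v = x")
    case True then show ?thesis using EVar assms by (simp add: pos_def sv_def)
  next
    case False
    then show ?thesis using EVar zz_nth2[of 0 n j a] p1
      by (simp add: pos_def sv_def e0_def)
  qed
next
  case (ECon c)
  then have "c \<in> set cs" using assms by simp
  then show ?thesis using ECon zz_nth2[of "cix c" n j a] cix[of c] len
    by (simp add: pos_def cv_def)
qed

lemma hmap_nth:
  assumes "j < m" "l < n + p"
  shows "hmap n j (zz n j a) ! l =
    (if l < n then entry_val ops (sv (a ! l)) (M (l mod k) j)
     else entry_val ops (sv (cv ! (l - n))) (M 0 j))"
proof (cases "l < n")
  case True
  have lk: "l mod k < k" using k1 by simp
  have "zz n j a ! pos (length (dl n j)) (M (l mod k) j)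
                   (SOME i. i < length (dl n j) \<and> dl n j ! i = l)
        = entry_val ops (sv (a ! l)) (M (l mod k) j)"
  proof (rule pos_val)
    show "\<And>c. M (l mod k) j = ECon c \<Longrightarrow> c \<in> set cs" using cs_in lk assms(1) by blast
    assume ex: "M (l mod k) j = EVar x"
    have "l \<in> set (dl n j)" using \<open>l < n\<close> ex by (simp add: dl_def)
    then have "\<exists>i. i < length (dl n j) \<and> dl n j ! i = l" by (simp add: in_set_conv_nth)
    then have "(SOME i. i < length (dl n j) \<and> dl n j ! i = l) < length (dl n j) \<and>
         dl n j ! (SOME i. i < length (dl n j) \<and> dl n j ! i = l) = l"
      by (rule someI_ex)
    then show "zz n j a ! (SOME i. i < length (dl n j) \<and> dl n j ! i = l) = a ! l"
      using zz_nth1 by metis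
  qed
  then show ?thesis using True assms by (simp add: hmap_def psi_def)
next
  case False
  have "zz n j a ! pos (length (dl n j)) (M 0 j) (length (dl n j) + (l - n))
        = entry_val ops (sv (cv ! (l - n))) (M 0 j)"
  proof (rule pos_val)
    show "\<And>c. M 0 j = ECon c \<Longrightarrow> c \<in> set cs" using cs_in k1 assms(1) by auto
    show "zz n j a ! (length (dl n j) + (l - n)) = cv ! (l - n)"
      using zz_nth2[of "l - n" n j a] False assms(2) by (simp del: add_diff_assoc)
  qed
  then show ?thesis using False assms by (simp add: hmap_def psi_def)
qed

lemma eval_b:
  assumes "a \<in> power_carrier A n" "l < n + p"
  shows "eval_trm ops (\<lambda>j. hmap n j (zz n j a) ! l) F = (a @ cv) ! l"
proof (cases "l < n")
  case True
  have aA: "a ! l \<in> A" using assms True by (auto simp: power_carrier_def)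
  have "eval_trm ops (\<lambda>j. hmap n j (zz n j a) ! l) F =
        eval_trm ops (\<lambda>j. entry_val ops (sv (a ! l)) (M (l mod k) j)) F"
    using varsF hmap_nth[OF _ assms(2)] True by (intro eval_cong) auto
  also have "\<dots> = sv (a ! l) x" using cube k1 sv_A[OF aA] by simp
  finally show ?thesis using True assms by (simp add: sv_def nth_append power_carrier_def)
next
  case False
  have cA: "cv ! (l - n) \<in> A" using assms False cv_A len_cv by (auto simp: power_carrier_def)
  have "eval_trm ops (\<lambda>j. hmap n j (zz n j a) ! l) F =
        eval_trm ops (\<lambda>j. entry_val ops (sv (cv ! (l - n))) (M 0 j)) F"
    using varsF hmap_nth[OF _ assms(2)] False by (intro eval_cong) auto
  also have "\<dots> = sv (cv ! (l - n)) x" using cube k1 sv_A[OF cA] by simp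
  finally show ?thesis using False assms by (simp add: sv_def nth_append power_carrier_def)
qed


lemma dl_len:
  assumes "j < m"
  shows "length (dl n j) \<le> n - n div k"
proof -
  have "\<exists>i<k. M i j \<noteq> EVar x" using cols assms by blast
  then obtain i0 where i0: "i0 < k" "M i0 j \<noteq> EVar x" by blast
  let ?P = "\<lambda>l. M (l mod k) j = EVar x"
  have sl: "length (filter ?P [0..<n]) + length (filter (\<lambda>l. \<not> ?P l) [0..<n]) = n"
    using sum_length_filter_compl[of ?P "[0..<n]"] by simp
  have sub: "(\<lambda>t. i0 + k * t) ` {..<n div k} \<subseteq> set (filter (\<lambda>l. \<not> ?P l) [0..<n])"
  proof
    fix y assume "y \<in> (\<lambda>t. i0 + k * t) ` {..<n div k}"
    then obtain t where t: "t < n div k" "y = i0 + k * t" by blast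
    have "k * (t + 1) \<le> k * (n div k)" using t(1) by (intro mult_le_mono2) simp
    also have "\<dots> \<le> n" by simp
    finally have "y < n" using t(2) i0(1) by simp
    moreover have "y mod k = i0" using t(2) i0(1) by simp
    ultimately show "y \<in> set (filter (\<lambda>l. \<not> ?P l) [0..<n])" using i0(2) by simp
  qed
  have "inj_on (\<lambda>t. i0 + k * t) {..<n div k}" using k1 by (intro inj_onI) simp
  then have "n div k = card ((\<lambda>t. i0 + k * t) ` {..<n div k})" by (simp add: card_image)
  also have "\<dots> \<le> card (set (filter (\<lambda>l. \<not> ?P l) [0..<n]))" by (intro card_mono sub) simp_all
  also have "\<dots> \<le> length (filter (\<lambda>l. \<not> ?P l) [0..<n])" by (rule card_length)
  finally show ?thesis using sl by (simp add: dl_def)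
qed


lemma step:
  assumes K: "\<forall>r \<le> n - n div k. \<exists>H. good r H \<and> real (card H) \<le> K"
  shows "\<exists>H. good n H \<and> real (card H) \<le> real m * K"
proof -
  define Hs where "Hs r = (SOME H. good r H \<and> real (card H) \<le> K)" for r
  have Hs: "good r (Hs r) \<and> real (card (Hs r)) \<le> K" if "r \<le> n - n div k" for r
    unfolding Hs_def by (rule someI_ex) (use K that in blast)
  define H' where "H' = (\<Union>j<m. hmap n j ` Hs (length (dl n j)))"
  have Hsj: "good (length (dl n j)) (Hs (length (dl n j))) \<and>
      real (card (Hs (length (dl n j)))) \<le> K" if "j < m" for j
    using Hs[OF dl_len[OF that]] .
  have fin: "finite H'" unfolding H'_def using Hsj by (auto simp: good_def)
  have hmap_pc: "hmap n j z \<in> power_carrier A (n + p)"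
    if "j < m" "z \<in> power_carrier A (length (dl n j) + p)" for j z
  proof -
    have "z ! psi n j l \<in> A" if l: "l < n + p" for l
    proof -
      have "psi n j l < length z" using psi_lt[OF \<open>j < m\<close> l] \<open>z \<in> power_carrier A _\<close>
        by (simp add: power_carrier_def)
      then show ?thesis using \<open>z \<in> power_carrier A _\<close> nth_mem by (auto simp: power_carrier_def)
    qed
    then show ?thesis by (auto simp: hmap_def power_carrier_def)
  qed
  have sub: "H' \<subseteq> power_carrier A (n + p)"
  proof
    fix y assume "y \<in> H'"
    then obtain j z where j: "j < m" and z: "z \<in> Hs (length (dl n j))" and y: "y = hmap n j z"
      unfolding H'_def by blast
    have "z \<in> power_carrier A (length (dl n j) + p)" using Hsj[OF j] z by (auto simp: good_def)
    then show "y \<in> power_carrier A (n + p)" using hmap_pc[OF j] y by simp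
  qed
  have gen: "a @ cv \<in> gen_power ar ops (n+p) H'" if a: "a \<in> power_carrier A n" for a
  proof -
    have bj: "hmap n j (zz n j a) \<in> gen_power ar ops (n+p) H' \<and>
              length (hmap n j (zz n j a)) = n + p" if j: "j < m" for j
    proof -
      let ?r = "length (dl n j)"
      have "map (\<lambda>i. a ! (dl n j ! i)) [0..<?r] \<in> power_carrier A ?r"
      proof -
        have "dl n j ! i < n" if "i < ?r" for i
          using nth_mem[OF that] by (simp add: dl_def)
        then show ?thesis using a by (fastforce simp: power_carrier_def)
      qed
      then have "zz n j a \<in> gen_power ar ops (?r + p) (Hs ?r)"
      proof -
        have "\<forall>a\<in>power_carrier A ?r. a @ cv \<in> gen_power ar ops (?r + p) (Hs ?r)"
          using Hsj[OF j] unfolding good_def by blast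
        then show ?thesis using \<open>map _ [0..<?r] \<in> _\<close> unfolding zz_def by blast
      qed
      then have "hmap n j (zz n j a) \<in> gen_power ar ops (n+p) (hmap n j ` Hs ?r)"
        unfolding hmap_def using psi_lt[OF j] by (intro gen_power_hom) auto
      moreover have "hmap n j ` Hs ?r \<subseteq> H'" using j unfolding H'_def by blast
      ultimately have "hmap n j (zz n j a) \<in> gen_power ar ops (n+p) H'"
        using gen_power_mono by metis
      then show ?thesis by (simp add: hmap_def)
    qed
    have "map (\<lambda>l. eval_trm ops (\<lambda>j. hmap n j (zz n j a) ! l) F) [0..<n+p]
          \<in> gen_power ar ops (n+p) H'"
      using wfF varsF bj by (intro gen_power_term) auto
    moreover have "map (\<lambda>l. eval_trm ops (\<lambda>j. hmap n j (zz n j a) ! l) F) [0..<n+p] = a @ cv"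
      using eval_b[OF a] a len_cv by (intro nth_equalityI) (auto simp: power_carrier_def)
    ultimately show ?thesis by simp
  qed
  have "card H' \<le> (\<Sum>j<m. card (hmap n j ` Hs (length (dl n j))))"
    unfolding H'_def by (rule card_UN_le) simp
  also have "\<dots> \<le> (\<Sum>j<m. card (Hs (length (dl n j))))"
    by (intro sum_mono card_image_le) (use Hsj in \<open>auto simp: good_def\<close>)
  finally have "real (card H') \<le> (\<Sum>j<m. real (card (Hs (length (dl n j)))))"
    by (metis of_nat_le_iff of_nat_sum)
  also have "\<dots> \<le> (\<Sum>j<m. K)" using Hsj by (intro sum_mono) auto
  also have "\<dots> = real m * K" by simp
  finally show ?thesis using fin sub gen unfolding good_def by blast
qed

lemma base:
  assumes G0: "finite G0" "generates_power A ar ops (p + k - 1) G0" and n: "n < k"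
  shows "\<exists>H. good n H \<and> card H \<le> card G0"
proof -
  define \<psi> where "\<psi> l = (if l < n then l else l - n + (k - 1))" for l
  define h where "h z = map (\<lambda>l. z ! \<psi> l) [0..<n+p]" for z :: "'a list"
  have psi: "\<forall>l<n+p. \<psi> l < p + k - 1" using n by (auto simp: \<psi>_def)
  have hpc: "h z \<in> power_carrier A (n+p)" if "z \<in> power_carrier A (p + k - 1)" for z
  proof -
    have "z ! \<psi> l \<in> A" if l: "l < n + p" for l
      using psi l \<open>z \<in> _\<close> nth_mem unfolding power_carrier_def by fastforce
    then show ?thesis by (auto simp: h_def power_carrier_def)
  qed
  have gen: "a @ cv \<in> gen_power ar ops (n+p) (h ` G0)" if a: "a \<in> power_carrier A n" for a
  proof -
    define z where "z = a @ replicate (k - 1 - n) e0 @ cv"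
    have "z \<in> power_carrier A (p + k - 1)"
      using a n e0_A cv_A len_cv by (auto simp: z_def power_carrier_def)
    then have "z \<in> gen_power ar ops (p + k - 1) G0" using G0(2) by (simp add: generates_power_def)
    then have "h z \<in> gen_power ar ops (n+p) (h ` G0)"
      unfolding h_def using psi by (intro gen_power_hom) auto
    moreover have "h z = a @ cv"
    proof (rule nth_equalityI)
      show "length (h z) = length (a @ cv)" using a len_cv by (simp add: h_def power_carrier_def)
      fix l assume "l < length (h z)"
      then have l: "l < n + p" by (simp add: h_def)
      have la: "length a = n" using a by (simp add: power_carrier_def)
      show "h z ! l = (a @ cv) ! l"
      proof (cases "l < n")
        case True then show ?thesis using l la by (simp add: h_def \<psi>_def z_def nth_append)
      next
        case False
        have idx: "l - n + (k - 1) = length a + (length (replicate (k - 1 - n) e0) + (l - n))"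
          using False la n by simp
        have "z ! (l - n + (k - 1)) = cv ! (l - n)"
          unfolding idx z_def by (simp only: nth_append_length_plus)
        then show ?thesis using False l la by (simp add: h_def \<psi>_def nth_append)
      qed
    qed
    ultimately show ?thesis by simp
  qed
  have "good n (h ` G0)" unfolding good_def
    using G0 hpc gen by (auto simp: generates_power_def)
  moreover have "card (h ` G0) \<le> card G0" using G0 by (simp add: card_image_le)
  ultimately show ?thesis by blast
qed

lemma proj:
  assumes "good n H"
  shows "\<exists>G. finite G \<and> generates_power A ar ops n G \<and> card G \<le> card H"
proof -
  define h where "h z = map (\<lambda>l. z ! l) [0..<n]" for z :: "'a list"
  have H: "finite H" "H \<subseteq> power_carrier A (n+p)"
    "\<forall>a\<in>power_carrier A n. a @ cv \<in> gen_power ar ops (n+p) H"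
    using assms by (auto simp: good_def)
  have hpc: "h z \<in> power_carrier A n" if "z \<in> power_carrier A (n + p)" for z
  proof -
    have "z ! l \<in> A" if l: "l < n" for l
      using l \<open>z \<in> _\<close> nth_mem unfolding power_carrier_def by fastforce
    then show ?thesis by (auto simp: h_def power_carrier_def)
  qed
  have sub: "h ` H \<subseteq> power_carrier A n" using H(2) hpc by blast
  have "a \<in> gen_power ar ops n (h ` H)" if a: "a \<in> power_carrier A n" for a
  proof -
    have "h (a @ cv) \<in> gen_power ar ops n (h ` H)"
      unfolding h_def using H(3) a by (intro gen_power_hom[where N="n+p"]) auto
    moreover have "h (a @ cv) = a"
      using a by (intro nth_equalityI) (auto simp: h_def power_carrier_def nth_append)
    ultimately show ?thesis by simp
  qed
  then have "gen_power ar ops n (h ` H) = power_carrier A n"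
    using gen_power_carrier[OF alg sub] by blast
  then have "generates_power A ar ops n (h ` H)" using sub by (simp add: generates_power_def)
  moreover have "card (h ` H) \<le> card H" using H(1) by (simp add: card_image_le)
  ultimately show ?thesis using H(1) by blast
qed

lemma main:
  assumes G0: "finite G0" "generates_power A ar ops (p + k - 1) G0"
  shows "(\<forall>n. fin_gen_power A ar ops n) \<and>
         (\<lambda>n. real (d_alg A ar ops n)) \<in>
            O(\<lambda>n. real n powr log (2 * real k / (2 * real k - 1)) (real m))"
proof -
  define w where "w = 2 * real k / (2 * real k - 1)"
  define \<alpha> where "\<alpha> = log w (real m)"
  define B0 where "B0 = real (card G0)"
  define bnd where "bnd n = (if n = 0 then B0 else real m * B0 * real n powr \<alpha>)" for n
  have k1r: "real k \<ge> 1" using k1 by simp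
  have w1: "w > 1" unfolding w_def using k1r by (simp add: field_simps)
  have m1r: "real m \<ge> 1" using m1 by simp
  have a0: "\<alpha> \<ge> 0" unfolding \<alpha>_def using w1 m1r by simp
  have wa: "w powr \<alpha> = real m" unfolding \<alpha>_def using w1 m1r by simp
  have B0: "B0 \<ge> 0" by (simp add: B0_def)
  have bnd_ge: "B0 \<le> bnd n" for n
  proof (cases "n = 0")
    case False
    then have "1 \<le> real n powr \<alpha>" using a0 by (intro ge_one_powr_ge_zero) auto
    then have "1 * 1 \<le> real m * real n powr \<alpha>" using m1r by (intro mult_mono) auto
    then have "B0 * 1 \<le> B0 * (real m * real n powr \<alpha>)" using B0 by (intro mult_left_mono) auto
    then show ?thesis using False by (simp add: bnd_def mult.assoc mult.commute mult.left_commute)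
  qed (simp add: bnd_def)
  have claim: "\<exists>H. good n H \<and> real (card H) \<le> bnd n" for n
  proof (induction n rule: less_induct)
    case (less n)
    show ?case
    proof (cases "n < k")
      case True
      then obtain H where "good n H" "card H \<le> card G0" using base[OF G0] by blast
      then show ?thesis using bnd_ge[of n] unfolding B0_def by (meson of_nat_le_iff order_trans)
    next
      case False
      then have nk: "n \<ge> k" by simp
      define q where "q = n div k"
      have "k div k \<le> n div k" by (rule div_le_mono[OF nk])
      then have q1: "q \<ge> 1" using k1 by (simp add: q_def)
      have nq: "n < k * q + k" unfolding q_def using k1
        by (metis add_less_cancel_left div_mult_mod_eq mod_less_divisor mult.commute zero_less_one order_less_le_trans)
      have "k * q + k \<le> 2 * k * q" using q1 by (simp add: algebra_simps)
      with nq have nq2: "real n \<le> 2 * real k * real q"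
        by (metis of_nat_le_iff of_nat_mult of_nat_numeral less_imp_le order_less_le_trans)
      have qn: "q \<le> n" by (simp add: q_def)
      have nw: "real n / w = real n - real n / (2 * real k)"
        unfolding w_def using k1r by (simp add: field_simps)
      have "real n / (2 * real k) \<le> real q" using nq2 k1r by (simp add: field_simps)
      then have rw: "real (n - q) \<le> real n / w" using nw qn by simp
      define K where "K = max B0 (real m * B0 * (real n / w) powr \<alpha>)"
      have "\<forall>r \<le> n - n div k. \<exists>H. good r H \<and> real (card H) \<le> K"
      proof (intro allI impI)
        fix r assume r: "r \<le> n - n div k"
        then have "r < n" using q1 q_def nk k1 by linarith
        then obtain H where H: "good r H" "real (card H) \<le> bnd r" using less.IH by blast
        have "bnd r \<le> K"
        proof (cases "r = 0")
          case True then show ?thesis by (simp add: bnd_def K_def)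
        next
          case False
          have "real r \<le> real (n - q)" using r q_def by (simp only: of_nat_le_iff)
          then have "real r \<le> real n / w" using rw by linarith
          then have "real r powr \<alpha> \<le> (real n / w) powr \<alpha>" using a0 by (intro powr_mono2) auto
          then have "real m * B0 * real r powr \<alpha> \<le> real m * B0 * (real n / w) powr \<alpha>"
            using m1r B0 by (intro mult_left_mono) auto
          then show ?thesis using False by (simp add: bnd_def K_def)
        qed
        then show "\<exists>H. good r H \<and> real (card H) \<le> K" using H by force
      qed
      then obtain H where H: "good n H" "real (card H) \<le> real m * K" using step by blast
      have "real m * K \<le> bnd n"
      proof -
        have n0: "n \<noteq> 0" using nk k1 by simp
        have "1 \<le> real n powr \<alpha>" using a0 n0 by (intro ge_one_powr_ge_zero) auto
        then have "real m * B0 * 1 \<le> real m * B0 * real n powr \<alpha>"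
          using m1r B0 by (intro mult_left_mono) auto
        then have "real m * B0 \<le> bnd n" using n0 by (simp add: bnd_def)
        moreover have "real m * (real m * B0 * (real n / w) powr \<alpha>) = bnd n"
          using n0 wa w1 m1r by (simp add: bnd_def powr_divide)
        ultimately show ?thesis by (simp add: K_def)
      qed
      then show ?thesis using H by force
    qed
  qed
  have each: "\<exists>G. finite G \<and> generates_power A ar ops n G \<and> real (card G) \<le> bnd n" for n
  proof -
    obtain H where H: "good n H" "real (card H) \<le> bnd n" using claim by blast
    obtain G where "finite G" "generates_power A ar ops n G" "card G \<le> card H"
      using proj[OF H(1)] by blast
    then show ?thesis using H(2) by (meson of_nat_le_iff order_trans)
  qed
  have d: "real (d_alg A ar ops n) \<le> bnd n" for n
  proof -
    obtain G where G: "finite G" "generates_power A ar ops n G" "real (card G) \<le> bnd n"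
      using each by blast
    have "d_alg A ar ops n \<le> card G" unfolding d_alg_def
      by (rule Least_le) (use G in blast)
    then show ?thesis using G(3) by (meson of_nat_le_iff order_trans)
  qed
  have fg: "\<forall>n. fin_gen_power A ar ops n" using each unfolding fin_gen_power_def by blast
  have "(\<lambda>n. real (d_alg A ar ops n)) \<in> O(\<lambda>n. real n powr \<alpha>)"
  proof (rule bigoI[where c = "real m * B0"])
    show "\<forall>\<^sub>F n in at_top. norm (real (d_alg A ar ops n)) \<le> real m * B0 * norm (real n powr \<alpha>)"
      unfolding eventually_at_top_linorder
    proof (intro exI allI impI)
      fix n :: nat assume "n \<ge> 1"
      then show "norm (real (d_alg A ar ops n)) \<le> real m * B0 * norm (real n powr \<alpha>)"
        using d[of n] by (simp add: bnd_def)
    qed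
  qed
  then show ?thesis using fg unfolding \<alpha>_def w_def by blast
qed

end

theorem theorem5p5:
  fixes A :: "'a set" and ar :: "'f \<Rightarrow> nat" and ops :: "'f \<Rightarrow> 'a list \<Rightarrow> 'a"
    and m p k :: nat
  assumes "is_algebra A ar ops"
    and "has_cube_term A ar ops m p k"
    and "p \<ge> 1"
    and "fin_gen_power A ar ops (p + k - 1)"
  shows "(\<forall>n. fin_gen_power A ar ops n) \<and>
         (\<lambda>n. real (d_alg A ar ops n)) \<in>
            O(\<lambda>n. real n powr log (2 * real k / (2 * real k - 1)) (real m))"
proof -
  obtain F :: "('f, nat) trm" and M x where
    wfF: "wf_trm ar F" and varsF: "vars_trm F \<subseteq> {..<m}"
    and Mar: "\<forall>i<k. \<forall>j<m. \<forall>c. M i j = ECon c \<longrightarrow> ar c = 0"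
    and fin: "finite (consts_of k m M)" and cardp: "card (consts_of k m M) = p"
    and cols: "\<forall>j<m. \<exists>i<k. M i j \<noteq> EVar x"
    and cube: "\<forall>i<k. \<forall>s. (\<forall>v. s v \<in> A) \<longrightarrow>
            eval_trm ops (\<lambda>j. entry_val ops s (M i j)) F = s x"
    using assms(2) unfolding has_cube_term_def by blast
  obtain cs where cs: "distinct cs" "set cs = consts_of k m M"
    using finite_distinct_list[OF fin] by blast
  have len: "length cs = p" using cs cardp distinct_card by metis
  have "consts_of k m M \<noteq> {}" using cardp assms(3) by auto
  then obtain i j c where ijc: "i < k" "j < m" "M i j = ECon c" unfolding consts_of_def by blast
  have k1: "k \<ge> 1" and m1: "m \<ge> 1" using ijc by auto
  have cs_in: "\<forall>i<k. \<forall>j<m. \<forall>c. M i j = ECon c \<longrightarrow> c \<in> set cs"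
    using cs(2) unfolding consts_of_def by blast
  have cs_ar: "\<forall>c\<in>set cs. ar c = 0" using cs(2) Mar unfolding consts_of_def by blast
  interpret cube_loc A ar ops k m p F M x cs
    using assms(1) wfF varsF cube cs_in cs_ar len assms(3) k1 m1 cols
    by (unfold_locales) auto
  obtain G0 where "finite G0" "generates_power A ar ops (p + k - 1) G0"
    using assms(4) unfolding fin_gen_power_def by blast
  then show ?thesis by (rule main)
qed

end
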